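(* Let $s\ge2$, $\eta>0$ and $z\in\mathbb{R}_{\ge0}^s$ with $\sum_j z_j>0$ not a constant vector. Let $\tilde z_k=\max\big(z_k-\eta\frac{\partial\mathcal{H}}{\partial z_k}(z),0\big)$ (with $\tilde z_k=0$ when $z_k=0$). Then $\tilde z$ is not a constant vector. Hence, iterating this update from a non-uniform initial vector, the masses never become uniform.
   Context: $\mathcal{H}(z)=-\sum_i \frac{z_i}{\sum_j z_j}\log\frac{z_i}{\sum_j z_j}$ with $0\log0=0$; for $z_k>0$ the gradient is the partial derivative, and for $z_k=0$ it is regarded as $+\infty$. *)

theory Defs
  imports "HOL-Analysis.Analysis"
begin

text \<open>Vectors in the nonnegative orthant of R^s are represented as functions
  nat => real; only the coordinates 0..s-1 are meaningful.\<close>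

definition shannon_H :: "nat \<Rightarrow> (nat \<Rightarrow> real) \<Rightarrow> real" where
  "shannon_H s z = (let S = (\<Sum>j<s. z j) in
     - (\<Sum>i<s. if z i = 0 then 0 else (z i / S) * ln (z i / S)))"

definition partial_H :: "nat \<Rightarrow> (nat \<Rightarrow> real) \<Rightarrow> nat \<Rightarrow> real" where
  "partial_H s z k = deriv (\<lambda>t. shannon_H s (z(k := t))) (z k)"

text \<open>One update step: for z k > 0, max (z k - eta * dH/dz_k) 0; for z k = 0 the
  gradient is +infinity, so the new coordinate is 0.\<close>
definition H_step :: "nat \<Rightarrow> real \<Rightarrow> (nat \<Rightarrow> real) \<Rightarrow> (nat \<Rightarrow> real)" where
  "H_step s \<eta> z = (\<lambda>k. if k < s \<and> z k > 0 then max (z k - \<eta> * partial_H s z k) 0 else 0)"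

definition const_vec :: "nat \<Rightarrow> (nat \<Rightarrow> real) \<Rightarrow> bool" where
  "const_vec s z \<longleftrightarrow> (\<forall>i<s. \<forall>j<s. z i = z j)"

end

theory Submission
  imports Defs
begin

lemma H_alt:
  assumes nn: "\<forall>i<s. z i \<ge> 0" and Sp: "(\<Sum>j<s. z j) > 0"
  shows "shannon_H s z = ln (\<Sum>j<s. z j) - (\<Sum>i<s. z i * ln (z i)) / (\<Sum>j<s. z j)"
proof -
  define S where "S = (\<Sum>j<s. z j)"
  have S: "S > 0" using Sp S_def by simp
  have t: "(if z i = 0 then 0 else (z i / S) * ln (z i / S)) = z i * ln (z i) / S - ln S * (z i / S)"
    if "i < s" for i
  proof (cases "z i = 0")
    case True then show ?thesis by simp
  next
    case False
    then have "z i > 0" using nn that by force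
    then show ?thesis using S False by (simp add: ln_div field_simps)
  qed
  have "shannon_H s z = - (\<Sum>i<s. z i * ln (z i) / S - ln S * (z i / S))"
    unfolding shannon_H_def Let_def S_def[symmetric] using t by (intro arg_cong[where f=uminus] sum.cong) auto
  also have "\<dots> = ln S * ((\<Sum>i<s. z i) / S) - (\<Sum>i<s. z i * ln (z i)) / S"
    by (simp add: sum_subtractf sum_distrib_left sum_divide_distrib)
  also have "\<dots> = ln S - (\<Sum>i<s. z i * ln (z i)) / S" using S S_def by simp
  finally show ?thesis using S_def by simp
qed

lemma sum_upd:
  fixes f :: "nat \<Rightarrow> real"
  assumes "k < s" and that: "\<forall>i. i \<noteq> k \<longrightarrow> f' i = f i"
  shows "(\<Sum>i<s. f' i) = (\<Sum>i<s. f i) - f k + f' k"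
proof -
  have fin: "finite {..<s}" by simp
  have "(\<Sum>i<s. f' i) = f' k + (\<Sum>i\<in>{..<s} - {k}. f' i)"
    using assms by (simp add: sum.remove)
  moreover have "(\<Sum>i<s. f i) = f k + (\<Sum>i\<in>{..<s} - {k}. f i)"
    using assms by (simp add: sum.remove)
  moreover have "(\<Sum>i\<in>{..<s} - {k}. f' i) = (\<Sum>i\<in>{..<s} - {k}. f i)"
    using that by (intro sum.cong) auto
  ultimately show ?thesis by simp
qed

lemma partial_formula:
  assumes nn: "\<forall>i<s. z i \<ge> 0" and Sp: "(\<Sum>j<s. z j) > 0" and k: "k < s" and zk: "z k > 0"
  shows "partial_H s z k = ((\<Sum>i<s. z i * ln (z i)) / (\<Sum>j<s. z j) - ln (z k)) / (\<Sum>j<s. z j)"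
proof -
  define S where "S = (\<Sum>j<s. z j)"
  define T where "T = (\<Sum>i<s. z i * ln (z i))"
  have S: "S > 0" using Sp S_def by simp
  have R: "S - z k \<ge> 0"
  proof -
    have "z k \<le> S" unfolding S_def using k nn
      by (intro member_le_sum) auto
    then show ?thesis by simp
  qed
  define g where "g t = ln (S - z k + t) - (T - z k * ln (z k) + t * ln t) / (S - z k + t)" for t
  have eq: "shannon_H s (z(k := t)) = g t" if "t \<in> {0<..}" for t
  proof -
    have t: "t > 0" using that by simp
    have s1: "(\<Sum>j<s. (z(k := t)) j) = S - z k + t"
      unfolding S_def using sum_upd[OF k, where f=z and f'="z(k:=t)"] by simp
    have s2: "(\<Sum>j<s. (z(k := t)) j * ln ((z(k := t)) j)) = T - z k * ln (z k) + t * ln t"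
      unfolding T_def using sum_upd[OF k, where f="\<lambda>j. z j * ln (z j)" and f'="\<lambda>j. (z(k:=t)) j * ln ((z(k:=t)) j)"] by simp
    have nn': "\<forall>i<s. (z(k := t)) i \<ge> 0" using nn t by auto
    have "S - z k + t > 0" using R t by linarith
    then have sp: "(\<Sum>j<s. (z(k := t)) j) > 0" using s1 by simp
    have "shannon_H s (z(k := t)) = ln (S - z k + t) - (T - z k * ln (z k) + t * ln t) / (S - z k + t)"
      using H_alt[OF nn' sp] unfolding s1 s2 .
    then show ?thesis using g_def by simp
  qed
  have Sk: "S - z k + z k > 0" using S by simp
  have "(g has_real_derivative
      (1 / (S - z k + z k) - ((ln (z k) + 1) * (S - z k + z k) - (T - z k * ln (z k) + z k * ln (z k))) / (S - z k + z k)^2)) (at (z k))"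
    unfolding g_def using Sk zk
    apply (intro derivative_eq_intros)
    apply (rule refl | simp)+
    apply (simp add: power2_eq_square)
    done
  then have d: "((\<lambda>t. shannon_H s (z(k := t))) has_real_derivative
      (1 / (S - z k + z k) - ((ln (z k) + 1) * (S - z k + z k) - (T - z k * ln (z k) + z k * ln (z k))) / (S - z k + z k)^2)) (at (z k))"
    by (rule has_field_derivative_transform_within_open[where S="{0<..}"]) (use zk eq in auto)
  have "partial_H s z k = (1 / (S - z k + z k) - ((ln (z k) + 1) * (S - z k + z k) - (T - z k * ln (z k) + z k * ln (z k))) / (S - z k + z k)^2)"
    unfolding partial_H_def using DERIV_imp_deriv[OF d] by simp
  also have "\<dots> = (T / S - ln (z k)) / S" using S by (simp add: field_simps power2_eq_square)
  finally show ?thesis using S_def T_def by simp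
qed


lemma step_inv:
  assumes s: "s \<ge> 2" and eta: "\<eta> > 0"
    and nn: "\<forall>i<s. z i \<ge> 0" and Sp: "(\<Sum>j<s. z j) > 0"
    and nc: "\<not> const_vec s z"
  shows "(\<forall>i<s. H_step s \<eta> z i \<ge> 0) \<and> (\<Sum>j<s. H_step s \<eta> z j) > 0 \<and> \<not> const_vec s (H_step s \<eta> z)"
proof -
  define S where "S = (\<Sum>j<s. z j)"
  define T where "T = (\<Sum>i<s. z i * ln (z i))"
  have S: "S > 0" using Sp S_def by simp
  have ne: "z ` {..<s} \<noteq> {}" using s by (auto simp: lessThan_empty_iff)
  obtain j where j: "j < s" "z j = Max (z ` {..<s})"
    using Max_in[OF _ ne] by auto
  have jmax: "z i \<le> z j" if "i < s" for i using j that by simp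
  obtain i where i: "i < s" "z i < z j"
  proof -
    have "\<exists>i<s. z i \<noteq> z j" using nc j(1) unfolding const_vec_def by metis
    then obtain i0 where i0: "i0 < s" "z i0 \<noteq> z j" by blast
    have "z i0 < z j" using jmax[OF i0(1)] i0(2) by linarith
    then show ?thesis using that i0(1) by blast
  qed
  have zj: "z j > 0" using i nn by force
  have pf: "partial_H s z k = (T / S - ln (z k)) / S" if "k < s" "z k > 0" for k
    using partial_formula[OF nn Sp that] S_def T_def by simp
  have TS: "T \<le> S * ln (z j)"
  proof -
    have "T \<le> (\<Sum>i<s. z i * ln (z j))" unfolding T_def
    proof (rule sum_mono)
      fix x assume x: "x \<in> {..<s}"
      show "z x * ln (z x) \<le> z x * ln (z j)"
      proof (cases "z x = 0")
        case False
        then have "z x > 0" using nn x by force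
        then show ?thesis using jmax[of x] x by (simp add: mult_left_mono)
      qed simp
    qed
    then show ?thesis by (simp add: S_def sum_distrib_right)
  qed
  have pj: "partial_H s z j \<le> 0"
  proof -
    have "T / S \<le> ln (z j)" using TS S by (simp add: divide_le_eq mult.commute)
    then show ?thesis using pf[OF j(1) zj] S by (simp add: divide_le_0_iff)
  qed
  have Hj: "H_step s \<eta> z j \<ge> z j" unfolding H_step_def using j(1) zj pj eta
    by (simp add: mult_nonneg_nonpos le_max_iff_disj)
  have Hi: "H_step s \<eta> z i < H_step s \<eta> z j"
  proof (cases "z i > 0")
    case False
    have "H_step s \<eta> z i = 0" unfolding H_step_def using False by simp
    then show ?thesis using Hj zj by linarith
  next
    case True
    have l: "ln (z i) < ln (z j)" using True i by simp
    have "- \<eta> * partial_H s z i < - \<eta> * partial_H s z j"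
      using pf[OF i(1) True] pf[OF j(1) zj] l S eta by (simp add: divide_strict_right_mono)
    then have "z i - \<eta> * partial_H s z i < z j - \<eta> * partial_H s z j" using i by simp
    moreover have "H_step s \<eta> z i = max (z i - \<eta> * partial_H s z i) 0"
      unfolding H_step_def using True i by simp
    moreover have "H_step s \<eta> z j = max (z j - \<eta> * partial_H s z j) 0"
      unfolding H_step_def using zj j by simp
    moreover have "z j - \<eta> * partial_H s z j > 0"
    proof (rule ccontr)
      assume "\<not> ?thesis"
      then have "max (z j - \<eta> * partial_H s z j) 0 = 0" by simp
      then show False using Hj zj \<open>H_step s \<eta> z j = _\<close> by linarith
    qed
    ultimately show ?thesis by (simp only:)
  qed
  have nn2: "\<forall>i<s. H_step s \<eta> z i \<ge> 0" unfolding H_step_def by auto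
  have "H_step s \<eta> z j \<le> (\<Sum>k<s. H_step s \<eta> z k)"
    using nn2 j(1) by (intro member_le_sum) auto
  then have "(\<Sum>k<s. H_step s \<eta> z k) > 0" using Hj zj by linarith
  moreover have "\<not> const_vec s (H_step s \<eta> z)" unfolding const_vec_def using Hi i(1) j(1) by (metis less_irrefl)
  ultimately show ?thesis using nn2 by blast
qed

theorem corollary5:
  fixes s :: nat and \<eta> :: real and z :: "nat \<Rightarrow> real"
  assumes "s \<ge> 2" and "\<eta> > 0"
    and "\<forall>i<s. z i \<ge> 0" and "(\<Sum>j<s. z j) > 0"
    and "\<not> const_vec s z"
  shows "\<not> const_vec s (H_step s \<eta> z) \<and> (\<forall>n. \<not> const_vec s ((H_step s \<eta> ^^ n) z))"
proof -
  have all: "(\<forall>i<s. (H_step s \<eta> ^^ n) z i \<ge> 0) \<and> (\<Sum>j<s. (H_step s \<eta> ^^ n) z j) > 0 \<and> \<not> const_vec s ((H_step s \<eta> ^^ n) z)" for n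
  proof (induction n)
    case 0
    show ?case unfolding funpow_0 id_apply using assms by blast
  next
    case (Suc n)
    have e: "(H_step s \<eta> ^^ Suc n) z = H_step s \<eta> ((H_step s \<eta> ^^ n) z)" by simp
    have A: "\<forall>i<s. (H_step s \<eta> ^^ n) z i \<ge> 0" "(\<Sum>j<s. (H_step s \<eta> ^^ n) z j) > 0"
      "\<not> const_vec s ((H_step s \<eta> ^^ n) z)" using Suc.IH by blast+
    show ?case unfolding e by (rule step_inv[OF assms(1,2) A])
  qed
  have e: "(H_step s \<eta> ^^ 1) z = H_step s \<eta> z" by simp
  have "\<not> const_vec s (H_step s \<eta> z)" using all[of 1] unfolding e by blast
  then show ?thesis using all by blast
qed

end
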